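(* Let $K\ge1$, $\beta\in(0,1)$, $V^{\mathrm c}>0$, and for each $k$ let $\alpha_k>0$ with $\sum_k\alpha_k=1$, $L_k>0$, $V_k^{\mathrm d}>0$, $R_k>0$. For $t_k>0$, $V_k^{\mathrm c}>0$ define \[ \widehat D_{k,1}=\frac{L_k}{t_kR_k}\cdot\frac{(t_kR_k+V_k^{\mathrm c})(t_kR_k+\beta V_k^{\mathrm d})}{V_k^{\mathrm d}V_k^{\mathrm c}(1+\beta)+t_kR_k(V_k^{\mathrm d}+V_k^{\mathrm c})},\qquad \widehat D_{k,2}=\frac{L_k}{t_kR_k}\cdot\frac{t_kR_k+\beta V_k^{\mathrm d}}{V_k^{\mathrm d}+t_kR_k}, \] and $\widehat D_k=\widehat D_{k,1}$ if $t_kR_k\ge\sqrt{\beta V_k^{\mathrm d}V_k^{\mathrm c}}$, $\widehat D_k=\widehat D_{k,2}$ if $t_kR_k<\sqrt{\beta V_k^{\mathrm d}V_k^{\mathrm c}}$. Consider the problem (Problem 4) \[ \min_{\{t_k,V_k^{\mathrm c}\}}\sum_{k=1}^K\alpha_k\widehat D_k\quad\text{s.t.}\quad \sum_{k=1}^K t_k\le1,\ t_k\ge0,\quad \sum_{k=1}^K V_k^{\mathrm c}\le V^{\mathrm c},\ V_k^{\mathrm c}\ge0. \] Then Problem 4 is a piecewise convex optimization problem: each $\widehat D_k$ is a continuous, piecewise-defined function of $(t_k,V_k^{\mathrm c})$ whose pieces $\widehat D_{k,1}$, $\widehat D_{k,2}$ are convex, and the objective $\sum_k\alpha_k\widehat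 D_k$ is convex in $(t_1,\dots,t_K,V_1^{\mathrm c},\dots,V_K^{\mathrm c})$ on the domain $t_k>0$, $V_k^{\mathrm c}>0$.
   Context: $\widehat D_k$ is the minimal end-to-end delay of device $k$ in the partial compression offloading model (local compression speed $V_k^{\mathrm d}$, edge compression speed $V_k^{\mathrm c}$, TDMA time fraction $t_k$, average channel rate $R_k$, $L_k$ raw bits, compression ratio $\beta$) after optimizing the fraction of data compressed locally. The paper asserts "Problem 4 is a piecewise convex optimization problem"; the claim spells this out as convexity of the pieces and of the overall objective. *)

theory Defs
  imports "HOL-Analysis.Analysis"
begin

definition Dhat1 :: "real \<Rightarrow> real \<Rightarrow> real \<Rightarrow> real \<Rightarrow> real \<Rightarrow> real \<Rightarrow> real" where
  "Dhat1 beta L R Vd t vc =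
     L / (t * R) * ((t * R + vc) * (t * R + beta * Vd)
       / (Vd * vc * (1 + beta) + t * R * (Vd + vc)))"

definition Dhat2 :: "real \<Rightarrow> real \<Rightarrow> real \<Rightarrow> real \<Rightarrow> real \<Rightarrow> real \<Rightarrow> real" where
  "Dhat2 beta L R Vd t vc = L / (t * R) * ((t * R + beta * Vd) / (Vd + t * R))"

definition Dhat :: "real \<Rightarrow> real \<Rightarrow> real \<Rightarrow> real \<Rightarrow> real \<Rightarrow> real \<Rightarrow> real" where
  "Dhat beta L R Vd t vc =
     (if t * R \<ge> sqrt (beta * Vd * vc) then Dhat1 beta L R Vd t vc
      else Dhat2 beta L R Vd t vc)"

end

theory Submission
  imports Defs
begin

lemma qol:
  fixes p q a1 a2 w1 w2 :: real
  assumes "0 \<le> p" "0 \<le> q" "p + q = 1" "0 < w1" "0 < w2"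
  shows "(p * a1 + q * a2)^2 / (p * w1 + q * w2) \<le> p * (a1^2 / w1) + q * (a2^2 / w2)"
proof -
  have W: "0 < p * w1 + q * w2"
    using assms by (smt (verit) mult_nonneg_nonneg mult_pos_pos)
  have pp: "p * p = p - p * q" "q * q = q - p * q" using assms by algebra+
  have key: "(p * (a1^2 / w1) + q * (a2^2 / w2)) * (p * w1 + q * w2) - (p * a1 + q * a2)^2
      = p * q * (a1 * w2 - a2 * w1)^2 / (w1 * w2)"
    using assms pp by (simp add: field_simps power2_eq_square)
  have "0 \<le> p * q * (a1 * w2 - a2 * w1)^2 / (w1 * w2)" using assms by simp
  with key have "(p * a1 + q * a2)^2 \<le> (p * (a1^2 / w1) + q * (a2^2 / w2)) * (p * w1 + q * w2)" by linarith
  then show ?thesis using W by (simp add: divide_le_eq)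
qed

lemma inv_conv:
  fixes p q w1 w2 :: real
  assumes "0 \<le> p" "0 \<le> q" "p + q = 1" "0 < w1" "0 < w2"
  shows "1 / (p * w1 + q * w2) \<le> p / w1 + q / w2"
  using qol[OF assms, of 1 1] assms by simp

definition Wf :: "real \<Rightarrow> real \<Rightarrow> real \<Rightarrow> real \<Rightarrow> real" where
  "Wf s b x v = s - b * s^2 / (x + b * s) + x - x^2 / (x + v)"

lemma Wf_pos: "0 < s \<Longrightarrow> 0 < b \<Longrightarrow> 0 < x \<Longrightarrow> 0 < v \<Longrightarrow> 0 < Wf s b x v"
proof -
  assume a: "0 < s" "0 < b" "0 < x" "0 < v"
  have "Wf s b x v = s * x / (x + b * s) + x * v / (x + v)"
  proof -
    have "0 < x + b * s" "0 < x + v" using a by (auto intro!: add_pos_pos mult_pos_pos)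
    then show ?thesis by (simp add: Wf_def field_simps power2_eq_square)
  qed
  then show ?thesis using a by (auto intro!: add_pos_pos divide_pos_pos mult_pos_pos)
qed

lemma D1_eq:
  assumes "0 < t" "0 < vc" "0 < R" "0 < V" "0 < b"
  shows "Dhat1 b L R V t vc = L / Wf V b (t * R) vc"
proof -
  have p: "0 < t * R" "0 < t * R + b * V" "0 < t * R + vc" "0 < V * vc * (1 + b) + t * R * (V + vc)"
    using assms by (auto intro!: add_pos_pos mult_pos_pos)
  have W: "Wf V b (t * R) vc = V * (t * R) / (t * R + b * V) + (t * R) * vc / (t * R + vc)"
    using p by (simp add: Wf_def field_simps power2_eq_square)
  have W2: "V * (t * R) / (t * R + b * V) + (t * R) * vc / (t * R + vc)
     = (t * R) * (V * vc * (1 + b) + t * R * (V + vc)) / ((t * R + b * V) * (t * R + vc))"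
    using p by (simp add: field_simps)
  show ?thesis unfolding W W2 Dhat1_def using p by (simp add: field_simps)
qed

lemma aux2:
  fixes x V b :: real
  assumes "0 < x" "0 < x + V"
  shows "b / x + (1 - b) / (x + V) = (x + b * V) / (x * (V + x))"
proof -
  have "x + V \<noteq> 0" "V + x \<noteq> 0" "x \<noteq> 0" using assms by auto
  then show ?thesis by (simp add: field_simps)
qed

lemma D2_eq:
  assumes "0 < t" "0 < R" "0 < V"
  shows "Dhat2 b L R V t vc = L * (b / (t * R) + (1 - b) / (t * R + V))"
proof -
  have p: "0 < t * R" "0 < t * R + V"
    using assms by (auto intro!: add_pos_pos mult_pos_pos)
  have "b / (t * R) + (1 - b) / (t * R + V) = (t * R + b * V) / ((t * R) * (V + t * R))"
    using p by (intro aux2) auto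
  then show ?thesis unfolding Dhat2_def using p by simp
qed

lemma Wf_concave:
  assumes "0 \<le> p" "0 \<le> q" "p + q = 1" "0 < s" "0 < b"
    "0 < x1" "0 < x2" "0 < v1" "0 < v2"
  shows "p * Wf s b x1 v1 + q * Wf s b x2 v2 \<le> Wf s b (p * x1 + q * x2) (p * v1 + q * v2)"
proof -
  have w1: "0 < x1 + b * s" "0 < x2 + b * s" using assms by (auto intro!: add_pos_pos mult_pos_pos)
  have e1: "p * (x1 + b * s) + q * (x2 + b * s) = p * x1 + q * x2 + b * s"
    using assms by (simp add: algebra_simps) (metis distrib_left mult.commute mult_1)
  have h1: "1 / (p * x1 + q * x2 + b * s) \<le> p / (x1 + b * s) + q / (x2 + b * s)"
    using inv_conv[OF assms(1-3) w1] e1 by simp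
  have h1': "b * s^2 / (p * x1 + q * x2 + b * s) \<le> p * (b * s^2 / (x1 + b * s)) + q * (b * s^2 / (x2 + b * s))"
    using mult_left_mono[OF h1, of "b * s^2"] assms by (simp add: algebra_simps)
  have w2: "0 < x1 + v1" "0 < x2 + v2" using assms by auto
  have e2: "p * (x1 + v1) + q * (x2 + v2) = p * x1 + q * x2 + (p * v1 + q * v2)"
    by (simp add: algebra_simps)
  have h2: "(p * x1 + q * x2)^2 / (p * x1 + q * x2 + (p * v1 + q * v2)) \<le> p * (x1^2 / (x1 + v1)) + q * (x2^2 / (x2 + v2))"
    using qol[OF assms(1-3) w2, of x1 x2] e2 by simp
  have e3: "p * s + q * s = s" using assms by (metis distrib_right mult_1 mult.commute)
  show ?thesis using h1' h2 e3 unfolding Wf_def by (simp add: algebra_simps)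
qed

lemma D1_conv:
  assumes "0 \<le> p" "0 \<le> q" "p + q = 1" "0 < b" "0 < L" "0 < R" "0 < V"
    "0 < t1" "0 < t2" "0 < c1" "0 < c2"
  shows "Dhat1 b L R V (p * t1 + q * t2) (p * c1 + q * c2) \<le> p * Dhat1 b L R V t1 c1 + q * Dhat1 b L R V t2 c2"
proof -
  have mpos: "0 < p * t1 + q * t2" "0 < p * c1 + q * c2"
    using assms by (smt (verit) mult_nonneg_nonneg mult_pos_pos)+
  define W1 where "W1 = Wf V b (t1 * R) c1"
  define W2 where "W2 = Wf V b (t2 * R) c2"
  have W1p: "0 < W1" "0 < W2" unfolding W1_def W2_def using assms by (auto intro!: Wf_pos)
  have xm: "(p * t1 + q * t2) * R = p * (t1 * R) + q * (t2 * R)" by (simp add: algebra_simps)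
  have conc: "p * W1 + q * W2 \<le> Wf V b ((p * t1 + q * t2) * R) (p * c1 + q * c2)"
    unfolding W1_def W2_def xm using assms by (intro Wf_concave) auto
  have pos: "0 < p * W1 + q * W2" using W1p assms by (smt (verit) mult_nonneg_nonneg mult_pos_pos)
  have "Dhat1 b L R V (p * t1 + q * t2) (p * c1 + q * c2) = L / Wf V b ((p * t1 + q * t2) * R) (p * c1 + q * c2)"
    using mpos assms by (intro D1_eq) auto
  also have "\<dots> \<le> L / (p * W1 + q * W2)"
    using conc pos assms by (intro divide_left_mono) auto
  also have "\<dots> = L * (1 / (p * W1 + q * W2))" by simp
  also have "\<dots> \<le> L * (p / W1 + q / W2)"
    using inv_conv[OF assms(1-3) W1p] assms by (intro mult_left_mono) auto
  also have "\<dots> = p * (L / W1) + q * (L / W2)" by (simp add: algebra_simps)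
  also have "\<dots> = p * Dhat1 b L R V t1 c1 + q * Dhat1 b L R V t2 c2"
    unfolding W1_def W2_def using assms by (simp add: D1_eq)
  finally show ?thesis .
qed

lemma D2_conv:
  assumes "0 \<le> p" "0 \<le> q" "p + q = 1" "0 < b" "b < 1" "0 < L" "0 < R" "0 < V"
    "0 < t1" "0 < t2"
  shows "Dhat2 b L R V (p * t1 + q * t2) c \<le> p * Dhat2 b L R V t1 c1 + q * Dhat2 b L R V t2 c2"
proof -
  have mpos: "0 < p * t1 + q * t2"
    using assms by (smt (verit) mult_nonneg_nonneg mult_pos_pos)
  have xm: "(p * t1 + q * t2) * R = p * (t1 * R) + q * (t2 * R)" by (simp add: algebra_simps)
  have xm2: "(p * t1 + q * t2) * R + V = p * (t1 * R + V) + q * (t2 * R + V)"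
    using assms by (simp add: algebra_simps) (metis distrib_left mult.commute mult_1)
  have i1: "1 / ((p * t1 + q * t2) * R) \<le> p / (t1 * R) + q / (t2 * R)"
    unfolding xm using assms by (intro inv_conv) auto
  have i2: "1 / ((p * t1 + q * t2) * R + V) \<le> p / (t1 * R + V) + q / (t2 * R + V)"
    unfolding xm2 using assms by (intro inv_conv) (auto intro!: add_pos_pos mult_pos_pos)
  have "b * (1 / ((p * t1 + q * t2) * R)) + (1 - b) * (1 / ((p * t1 + q * t2) * R + V))
     \<le> b * (p / (t1 * R) + q / (t2 * R)) + (1 - b) * (p / (t1 * R + V) + q / (t2 * R + V))"
    using i1 i2 assms by (intro add_mono mult_left_mono) auto
  then have "L * (b * (1 / ((p * t1 + q * t2) * R)) + (1 - b) * (1 / ((p * t1 + q * t2) * R + V)))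
     \<le> L * (b * (p / (t1 * R) + q / (t2 * R)) + (1 - b) * (p / (t1 * R + V) + q / (t2 * R + V)))"
    using assms by (intro mult_left_mono) auto
  then show ?thesis using assms mpos by (simp add: D2_eq algebra_simps)
qed

lemma Dhat_max:
  assumes "0 < b" "0 < L" "0 < R" "0 < V" "0 < t" "0 < c"
  shows "Dhat b L R V t c = max (Dhat1 b L R V t c) (Dhat2 b L R V t c)"
proof -
  define x where "x = t * R"
  have x: "0 < x" using assms by (simp add: x_def)
  have d1: "Dhat1 b L R V t c = L / (V * x / (x + b * V) + x * c / (x + c))"
  proof -
    have "0 < x + b * V" "0 < x + c" using assms x by (auto intro!: add_pos_pos mult_pos_pos)
    then show ?thesis using assms unfolding x_def by (simp add: D1_eq Wf_def field_simps power2_eq_square)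
  qed
  have d2: "Dhat2 b L R V t c = L / (V * x / (x + b * V) + x * x / (x + b * V))"
  proof -
    have "0 < x + b * V" "0 < x + V" using assms x by (auto intro!: add_pos_pos mult_pos_pos)
    have e: "V * x / (x + b * V) + x * x / (x + b * V) = x * (V + x) / (x + b * V)"
      by (simp add: add_divide_distrib[symmetric] algebra_simps)
    then have "(x + b * V) / (x * (V + x)) = 1 / (V * x / (x + b * V) + x * x / (x + b * V))"
      unfolding e by simp
    then have "L * ((x + b * V) / (x * (V + x))) = L / (V * x / (x + b * V) + x * x / (x + b * V))"
      by simp
    moreover have "Dhat2 b L R V t c = L * ((x + b * V) / (x * (V + x)))"
      unfolding Dhat2_def x_def by simp
    ultimately show ?thesis by simp
  qed
  have A: "0 < V * x / (x + b * V)" using assms x by (auto intro!: divide_pos_pos mult_pos_pos add_pos_pos)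
  have B: "0 < x * c / (x + c)" "0 < x * x / (x + b * V)" using assms x by (auto intro!: divide_pos_pos mult_pos_pos add_pos_pos)
  have cmp: "x * c / (x + c) \<le> x * x / (x + b * V) \<longleftrightarrow> b * V * c \<le> x^2"
  proof -
    have "x * c / (x + c) \<le> x * x / (x + b * V) \<longleftrightarrow> x * c * (x + b * V) \<le> x * x * (x + c)"
    proof -
      have "0 < x + b * V" "0 < x + c" using assms x by (auto intro!: add_pos_pos mult_pos_pos)
      then show ?thesis by (simp add: field_simps)
    qed
    also have "\<dots> \<longleftrightarrow> x * (c * (x + b * V)) \<le> x * (x * (x + c))" by (simp add: algebra_simps)
    also have "\<dots> \<longleftrightarrow> c * (x + b * V) \<le> x * (x + c)" using x by simp
    also have "\<dots> \<longleftrightarrow> b * V * c \<le> x^2" by (simp add: algebra_simps power2_eq_square)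
    finally show ?thesis .
  qed
  have sq: "sqrt (b * V * c) \<le> x \<longleftrightarrow> b * V * c \<le> x^2"
    using x assms by (simp add: real_sqrt_le_iff')
  show ?thesis
  proof (cases "b * V * c \<le> x^2")
    case True
    then have "x * c / (x + c) \<le> x * x / (x + b * V)" using cmp by simp
    then have "Dhat2 b L R V t c \<le> Dhat1 b L R V t c" unfolding d1 d2 using A B assms x
      by (intro divide_left_mono) (auto intro!: add_pos_pos mult_pos_pos)
    then show ?thesis using True sq unfolding Dhat_def x_def by simp
  next
    case False
    then have "x * x / (x + b * V) \<le> x * c / (x + c)" using cmp by simp
    then have "Dhat1 b L R V t c \<le> Dhat2 b L R V t c" unfolding d1 d2 using A B assms x
      by (intro divide_left_mono) (auto intro!: add_pos_pos mult_pos_pos)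
    then show ?thesis using False sq unfolding Dhat_def x_def by simp
  qed
qed

lemma Dhat_conv:
  assumes "0 \<le> p" "0 \<le> q" "p + q = 1" "0 < b" "b < 1" "0 < L" "0 < R" "0 < V"
    "0 < t1" "0 < t2" "0 < c1" "0 < c2"
  shows "Dhat b L R V (p * t1 + q * t2) (p * c1 + q * c2) \<le> p * Dhat b L R V t1 c1 + q * Dhat b L R V t2 c2"
proof -
  have mpos: "0 < p * t1 + q * t2" "0 < p * c1 + q * c2"
    using assms by (smt (verit) mult_nonneg_nonneg mult_pos_pos)+
  have a: "Dhat1 b L R V (p * t1 + q * t2) (p * c1 + q * c2) \<le> p * Dhat b L R V t1 c1 + q * Dhat b L R V t2 c2"
    using D1_conv[OF assms(1-4,6-12)] assms
    by (simp add: Dhat_max) (smt (verit) mult_left_mono max.cobounded1)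
  have b: "Dhat2 b L R V (p * t1 + q * t2) (p * c1 + q * c2) \<le> p * Dhat b L R V t1 c1 + q * Dhat b L R V t2 c2"
    using D2_conv[OF assms(1-10), of "p * c1 + q * c2" c1 c2] assms
    by (simp add: Dhat_max) (smt (verit) mult_left_mono max.cobounded2)
  show ?thesis using a b mpos assms by (simp add: Dhat_max)
qed

lemma convex_quad: "convex {p :: real \<times> real. 0 < fst p \<and> 0 < snd p}"
proof -
  have "{p :: real \<times> real. 0 < fst p \<and> 0 < snd p} = {0<..} \<times> {0<..}" by auto
  then show ?thesis by (simp add: convex_Times)
qed

lemma convex_vquad: "convex {p :: (real ^ 'k) \<times> (real ^ 'k). \<forall>k. 0 < fst p $ k \<and> 0 < snd p $ k}"
  unfolding convex_alt
proof (intro ballI allI impI, clarsimp)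
  fix a b c d :: "real ^ 'k" and u :: real and k
  assume h: "\<forall>k. 0 < a $ k \<and> 0 < b $ k" "\<forall>k. 0 < c $ k \<and> 0 < d $ k" "0 \<le> u" "u \<le> 1"
  have "0 < (1 - u) * a $ k + u * c $ k" "0 < (1 - u) * b $ k + u * d $ k"
    using h by (smt (verit) mult_nonneg_nonneg mult_pos_pos mult_le_cancel_left1)+
  then show "0 < (1 - u) * a $ k + u * c $ k \<and> 0 < (1 - u) * b $ k + u * d $ k" by simp
qed

theorem theorem3:
  fixes beta Vc_tot :: real
    and alpha L Vd R :: "'k::finite \<Rightarrow> real"
  assumes "0 < beta" "beta < 1" "0 < Vc_tot"
    and "\<And>k. 0 < alpha k" "(\<Sum>k\<in>UNIV. alpha k) = 1"
    and "\<And>k. 0 < L k" "\<And>k. 0 < Vd k" "\<And>k. 0 < R k"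
  shows "(\<forall>k. continuous_on {p :: real \<times> real. 0 < fst p \<and> 0 < snd p}
                 (\<lambda>(t, vc). Dhat beta (L k) (R k) (Vd k) t vc)
            \<and> convex_on {p :: real \<times> real. 0 < fst p \<and> 0 < snd p}
                 (\<lambda>(t, vc). Dhat1 beta (L k) (R k) (Vd k) t vc)
            \<and> convex_on {p :: real \<times> real. 0 < fst p \<and> 0 < snd p}
                 (\<lambda>(t, vc). Dhat2 beta (L k) (R k) (Vd k) t vc))
       \<and> convex_on {p :: (real ^ 'k) \<times> (real ^ 'k). \<forall>k. 0 < fst p $ k \<and> 0 < snd p $ k}
           (\<lambda>(t, vc). \<Sum>k\<in>UNIV. alpha k * Dhat beta (L k) (R k) (Vd k) (t $ k) (vc $ k))"
proof (intro conjI allI)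
  let ?S = "{p :: real \<times> real. 0 < fst p \<and> 0 < snd p}"
  fix k
  have b: "0 < beta" "beta < 1" and Lk: "0 < L k" and Rk: "0 < R k" and Vk: "0 < Vd k"
    using assms by auto
  show "continuous_on ?S (\<lambda>(t, vc). Dhat beta (L k) (R k) (Vd k) t vc)"
  proof -
    have "continuous_on ?S (\<lambda>p. max (Dhat1 beta (L k) (R k) (Vd k) (fst p) (snd p))
                                     (Dhat2 beta (L k) (R k) (Vd k) (fst p) (snd p)))"
    proof -
      have nz: "\<forall>p\<in>?S. fst p * R k \<noteq> 0 \<and> Vd k + fst p * R k \<noteq> 0 \<and>
          Vd k * snd p * (1 + beta) + fst p * R k * (Vd k + snd p) \<noteq> 0"
      proof
        fix p :: "real \<times> real" assume "p \<in> ?S"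
        then have p: "0 < fst p" "0 < snd p" by auto
        have "0 < fst p * R k" using p Rk by simp
        moreover have "0 < Vd k + fst p * R k" using p Rk Vk by (intro add_pos_pos) auto
        moreover have "0 < Vd k * snd p * (1 + beta) + fst p * R k * (Vd k + snd p)"
          using p Rk Vk b by (intro add_pos_pos mult_pos_pos) auto
        ultimately show "fst p * R k \<noteq> 0 \<and> Vd k + fst p * R k \<noteq> 0 \<and>
          Vd k * snd p * (1 + beta) + fst p * R k * (Vd k + snd p) \<noteq> 0" by linarith
      qed
      show ?thesis unfolding Dhat1_def Dhat2_def
        by (intro continuous_intros) (use nz in auto)
    qed
    then show ?thesis
      by (rule continuous_on_cong[THEN iffD1, rotated 2])
         (use b Lk Rk Vk in \<open>auto simp: Dhat_max\<close>)
  qed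
  show "convex_on ?S (\<lambda>(t, vc). Dhat1 beta (L k) (R k) (Vd k) t vc)"
  proof (rule convex_onI[OF _ convex_quad])
    fix u :: real and x y :: "real \<times> real"
    assume "0 < u" "u < 1" "x \<in> ?S" "y \<in> ?S"
    then show "(\<lambda>(t, vc). Dhat1 beta (L k) (R k) (Vd k) t vc) ((1 - u) *\<^sub>R x + u *\<^sub>R y)
       \<le> (1 - u) * (\<lambda>(t, vc). Dhat1 beta (L k) (R k) (Vd k) t vc) x + u * (\<lambda>(t, vc). Dhat1 beta (L k) (R k) (Vd k) t vc) y"
      using D1_conv[of "1 - u" u beta "L k" "R k" "Vd k" "fst x" "fst y" "snd x" "snd y"] b Lk Rk Vk
      by (cases x; cases y) auto
  qed
  show "convex_on ?S (\<lambda>(t, vc). Dhat2 beta (L k) (R k) (Vd k) t vc)"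
  proof (rule convex_onI[OF _ convex_quad])
    fix u :: real and x y :: "real \<times> real"
    assume "0 < u" "u < 1" "x \<in> ?S" "y \<in> ?S"
    then show "(\<lambda>(t, vc). Dhat2 beta (L k) (R k) (Vd k) t vc) ((1 - u) *\<^sub>R x + u *\<^sub>R y)
       \<le> (1 - u) * (\<lambda>(t, vc). Dhat2 beta (L k) (R k) (Vd k) t vc) x + u * (\<lambda>(t, vc). Dhat2 beta (L k) (R k) (Vd k) t vc) y"
      using D2_conv[of "1 - u" u beta "L k" "R k" "Vd k" "fst x" "fst y" "(1 - u) * snd x + u * snd y" "snd x" "snd y"] b Lk Rk Vk
      by (cases x; cases y) auto
  qed
next
  let ?T = "{p :: (real ^ 'k) \<times> (real ^ 'k). \<forall>k. 0 < fst p $ k \<and> 0 < snd p $ k}"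
  let ?F = "\<lambda>(t, vc). \<Sum>k\<in>UNIV. alpha k * Dhat beta (L k) (R k) (Vd k) (t $ k) (vc $ k)"
  show "convex_on ?T ?F"
  proof (rule convex_onI[OF _ convex_vquad])
    fix u :: real and x y :: "(real ^ 'k) \<times> (real ^ 'k)"
    assume h: "0 < u" "u < 1" "x \<in> ?T" "y \<in> ?T"
    obtain a c where x: "x = (a, c)" by (cases x)
    obtain a' c' where y: "y = (a', c')" by (cases y)
    have each: "alpha k * Dhat beta (L k) (R k) (Vd k) ((1 - u) * a $ k + u * a' $ k) ((1 - u) * c $ k + u * c' $ k)
       \<le> (1 - u) * (alpha k * Dhat beta (L k) (R k) (Vd k) (a $ k) (c $ k))
         + u * (alpha k * Dhat beta (L k) (R k) (Vd k) (a' $ k) (c' $ k))" for k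
    proof -
      have "Dhat beta (L k) (R k) (Vd k) ((1 - u) * a $ k + u * a' $ k) ((1 - u) * c $ k + u * c' $ k)
          \<le> (1 - u) * Dhat beta (L k) (R k) (Vd k) (a $ k) (c $ k) + u * Dhat beta (L k) (R k) (Vd k) (a' $ k) (c' $ k)"
        using h x y assms by (intro Dhat_conv) auto
      then have "alpha k * Dhat beta (L k) (R k) (Vd k) ((1 - u) * a $ k + u * a' $ k) ((1 - u) * c $ k + u * c' $ k)
          \<le> alpha k * ((1 - u) * Dhat beta (L k) (R k) (Vd k) (a $ k) (c $ k) + u * Dhat beta (L k) (R k) (Vd k) (a' $ k) (c' $ k))"
        using assms(4)[of k] by (intro mult_left_mono) auto
      then show ?thesis by (simp add: algebra_simps)
    qed
    have "?F ((1 - u) *\<^sub>R x + u *\<^sub>R y) = (\<Sum>k\<in>UNIV. alpha k * Dhat beta (L k) (R k) (Vd k) ((1 - u) * a $ k + u * a' $ k) ((1 - u) * c $ k + u * c' $ k))"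
      unfolding x y by simp
    also have "\<dots> \<le> (\<Sum>k\<in>UNIV. (1 - u) * (alpha k * Dhat beta (L k) (R k) (Vd k) (a $ k) (c $ k))
         + u * (alpha k * Dhat beta (L k) (R k) (Vd k) (a' $ k) (c' $ k)))"
      by (rule sum_mono) (rule each)
    also have "\<dots> = (1 - u) * ?F x + u * ?F y"
      unfolding x y by (simp add: sum.distrib sum_distrib_left)
    finally show "?F ((1 - u) *\<^sub>R x + u *\<^sub>R y) \<le> (1 - u) * ?F x + u * ?F y" .
  qed
qed

end
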